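(* Let $\mathcal{X}\subseteq\mathbb{R}^d$ be closed and convex, $\mu,\sigma,\epsilon,\delta>0$. Let $h:\mathcal{X}\to\mathbb{R}$ be continuously differentiable with $D_h(x,y)\ge\frac\sigma2\|x-y\|^2$ for all $x,y$, and let $f:\mathcal{X}\to\mathbb{R}$ be differentiable with $(1/\epsilon)$-Lipschitz gradient, $\mu$-uniformly convex with respect to $h$ (i.e. $D_f(x,y)\ge\mu D_h(x,y)$ for all $x,y$), with minimizer $x^\ast$. Let $(A_k)_{k\ge0}$ be a nondecreasing sequence of positive numbers, $\alpha_k=A_{k+1}-A_k$, $\tau_k=\alpha_k/A_{k+1}$, and $E_k=A_k\big(\mu D_h(x^\ast,z_k)+f(y_k)-f(x^\ast)\big)$. Suppose sequences $(x_k),(y_k),(z_k)$ in $\mathcal{X}$ satisfy, for all $k$, $$x_k=\frac{\tau_k}{1+\tau_k}z_k+\frac1{1+\tau_k}y_k,\qquad \nabla h(z_{k+1})-\nabla h(z_k)=\tau_k\Big(\nabla h(x_k)-\nabla h(z_k)-\frac1\mu\nabla f(x_k)\Big),$$ with $y_{k+1}\in\mathcal{X}$ arbitrary. Then $\frac{E_{k+1}-E_k}{\delta}\le\varepsilon_{k+1}$, where $$\varepsilon_{k+1}=\frac{A_{k+1}}{\delta}\big(f(y_{k+1})-f(x_k)\big)+\frac{A_{k+1}}{\delta}\Big(\frac{\tau_k}{2\epsilon}-\frac{\sigma\mu}{2\tau_k}\Big)\|x_k-y_k\|^2-\frac{A_{k+1}\mu\sigma}{2\delta}\|x_k-y_k\|^2+\frac{\alpha_k}{\delta}\langle\nabla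 f(x_k),y_k-x_k\rangle+\frac{A_{k+1}\mu}{2\sigma\delta}\Big\|\tau_k\Big(\nabla h(x_k)-\nabla h(z_k)-\frac1\mu\nabla f(x_k)\Big)\Big\|^2.$$ When $\mathcal{X}=\mathbb{R}^d$ and $h=\frac12\|\cdot\|^2$, this becomes $$\varepsilon_{k+1}=\frac{A_{k+1}}{\delta}\Big(f(y_{k+1})-f(x_k)+\frac{\tau_k^2}{2\mu}\|\nabla f(x_k)\|^2+\Big(\frac{\tau_k}{2\epsilon}-\frac{\mu}{2\tau_k}\Big)\|x_k-y_k\|^2\Big).$$
   Context: $\|\cdot\|$ is the Euclidean norm; for differentiable $g$, $D_g(y,x)=g(y)-g(x)-\langle\nabla g(x),y-x\rangle$. *)

theory Defs
  imports "HOL-Analysis.Analysis"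
begin

definition bregman :: "('a::real_inner \<Rightarrow> real) \<Rightarrow> ('a \<Rightarrow> 'a) \<Rightarrow> 'a \<Rightarrow> 'a \<Rightarrow> real" where
  "bregman g dg y x = g y - g x - dg x \<bullet> (y - x)"

end

theory Submission
  imports Defs
begin

lemma core:
  fixes X :: "'a::real_inner set" and h f :: "'a \<Rightarrow> real" and gh gf :: "'a \<Rightarrow> 'a"
    and \<mu> \<sigma> \<epsilon> A0 A1 :: real and xs x y z z' y' :: 'a
  assumes pos: "\<mu> > 0" "\<sigma> > 0" "\<epsilon> > 0"
    and h_strong: "\<And>u v. u \<in> X \<Longrightarrow> v \<in> X \<Longrightarrow> bregman h gh u v \<ge> \<sigma> / 2 * (norm (u - v))\<^sup>2"
    and f_lip: "\<And>u v. u \<in> X \<Longrightarrow> v \<in> X \<Longrightarrow> norm (gf u - gf v) \<le> (1 / \<epsilon>) * norm (u - v)"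
    and f_unif: "\<And>u v. u \<in> X \<Longrightarrow> v \<in> X \<Longrightarrow> bregman f gf u v \<ge> \<mu> * bregman h gh u v"
    and xs_in: "xs \<in> X" and xs_min: "\<And>u. u \<in> X \<Longrightarrow> f xs \<le> f u"
    and A: "0 < A0" "A0 \<le> A1"
    and inX: "x \<in> X" "y \<in> X" "z \<in> X" "z' \<in> X" "y' \<in> X"
    and coup: "x = (((A1 - A0) / A1) / (1 + (A1 - A0) / A1)) *\<^sub>R z + (1 / (1 + (A1 - A0) / A1)) *\<^sub>R y"
    and mir: "gh z' - gh z = ((A1 - A0) / A1) *\<^sub>R (gh x - gh z - (1 / \<mu>) *\<^sub>R gf x)"
  shows "A1 * (\<mu> * bregman h gh xs z' + f y' - f xs) - A0 * (\<mu> * bregman h gh xs z + f y - f xs) \<le>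
      A1 * (f y' - f x)
    + A1 * (((A1 - A0) / A1) / (2 * \<epsilon>) - \<sigma> * \<mu> / (2 * ((A1 - A0) / A1))) * (norm (x - y))\<^sup>2
    - A1 * \<mu> * \<sigma> / 2 * (norm (x - y))\<^sup>2
    + (A1 - A0) * (gf x \<bullet> (y - x))
    + A1 * \<mu> / (2 * \<sigma>) * (norm (((A1 - A0) / A1) *\<^sub>R (gh x - gh z - (1 / \<mu>) *\<^sub>R gf x)))\<^sup>2"
proof -
  define \<alpha> where "\<alpha> = A1 - A0"
  define \<tau> where "\<tau> = \<alpha> / A1"
  define g where "g = gf x"
  define w where "w = \<tau> *\<^sub>R (gh x - gh z - (1 / \<mu>) *\<^sub>R g)"
  define D where "D = bregman h gh"
  define N where "N = (norm (x - y))\<^sup>2"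
  have A1p: "A1 > 0" using A by linarith
  have al0: "\<alpha> \<ge> 0" using A \<alpha>_def by simp
  have tau0: "\<tau> \<ge> 0" using al0 A1p \<tau>_def by simp
  have A1tau: "A1 * \<tau> = \<alpha>" using A1p \<tau>_def by simp
  have mir': "gh z' - gh z = w" using mir unfolding w_def \<tau>_def \<alpha>_def g_def .
  have "(1 + \<tau>) *\<^sub>R x = \<tau> *\<^sub>R z + y"
  proof -
    have "1 + \<tau> \<noteq> 0" using tau0 by simp
    then show ?thesis using coup unfolding \<tau>_def \<alpha>_def by (simp add: scaleR_add_right)
  qed
  then have yx: "y - x = \<tau> *\<^sub>R (x - z)" by (simp add: algebra_simps)
  have Nz: "N = \<tau>^2 * (norm (x - z))\<^sup>2"
    unfolding N_def using yx by (metis norm_minus_commute norm_scaleR power_mult_distrib real_norm_def power2_abs)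
  have I1: "D xs z' - D xs z = - D z' z + w \<bullet> (z' - xs)"
    unfolding D_def bregman_def using mir' by (simp add: algebra_simps inner_diff_left inner_diff_right)
  have I2: "(gh x - gh z) \<bullet> (z - xs) = - D z x - D xs z + D xs x"
    unfolding D_def bregman_def by (simp add: algebra_simps inner_diff_left inner_diff_right)
  have I3: "w \<bullet> (z' - xs) = w \<bullet> (z' - z) + \<tau> * ((gh x - gh z) \<bullet> (z - xs)) - \<tau> / \<mu> * (g \<bullet> (z - xs))"
    unfolding w_def by (simp add: algebra_simps inner_diff_left inner_diff_right)
  have a: "\<mu> * D xs x \<le> f xs - f x - g \<bullet> (xs - x)"
    using f_unif[OF xs_in inX(1)] unfolding D_def g_def bregman_def by simp
  have b: "\<mu> * (\<sigma> / 2 * N) \<le> f y - f x - g \<bullet> (y - x)"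
  proof -
    have "\<mu> * (\<sigma> / 2 * N) \<le> \<mu> * D y x"
      using h_strong[OF inX(2) inX(1)] pos unfolding D_def N_def by (simp add: norm_minus_commute)
    also have "\<dots> \<le> f y - f x - g \<bullet> (y - x)"
      using f_unif[OF inX(2) inX(1)] unfolding D_def g_def bregman_def by simp
    finally show ?thesis .
  qed
  have c: "\<mu> * (w \<bullet> (z' - z) - D z' z) \<le> \<mu> * (norm w)\<^sup>2 / (2 * \<sigma>)"
  proof -
    have "0 \<le> (norm (w - \<sigma> *\<^sub>R (z' - z)))\<^sup>2" by simp
    also have "\<dots> = (norm w)\<^sup>2 - 2 * \<sigma> * (w \<bullet> (z' - z)) + \<sigma>^2 * (norm (z' - z))\<^sup>2"
      unfolding power2_norm_eq_inner by (simp add: algebra_simps inner_diff_left inner_diff_right inner_commute power2_eq_square)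
    finally have "w \<bullet> (z' - z) - \<sigma> / 2 * (norm (z' - z))\<^sup>2 \<le> (norm w)\<^sup>2 / (2 * \<sigma>)"
      using pos by (simp add: field_simps power2_eq_square)
    moreover have "D z' z \<ge> \<sigma> / 2 * (norm (z' - z))\<^sup>2" using h_strong[OF inX(4) inX(3)] unfolding D_def .
    ultimately have "w \<bullet> (z' - z) - D z' z \<le> (norm w)\<^sup>2 / (2 * \<sigma>)" by linarith
    then have "\<mu> * (w \<bullet> (z' - z) - D z' z) \<le> \<mu> * ((norm w)\<^sup>2 / (2 * \<sigma>))"
      using pos by (intro mult_left_mono) auto
    then show ?thesis by (simp only: times_divide_eq_right)
  qed
  have d: "D z x \<ge> \<sigma> / 2 * (norm (x - z))\<^sup>2"
    using h_strong[OF inX(3) inX(1)] unfolding D_def by (simp add: norm_minus_commute)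
  have e: "\<mu> * \<sigma> * N \<le> (1 / \<epsilon>) * N"
  proof -
    have s1: "f x - f y - gf y \<bullet> (x - y) \<ge> \<mu> * (\<sigma> / 2 * N)"
    proof -
      have "\<mu> * (\<sigma> / 2 * N) \<le> \<mu> * D x y"
        using h_strong[OF inX(1) inX(2)] pos unfolding D_def N_def by simp
      also have "\<dots> \<le> f x - f y - gf y \<bullet> (x - y)"
        using f_unif[OF inX(1) inX(2)] unfolding D_def bregman_def by simp
      finally show ?thesis .
    qed
    have "(gf x - gf y) \<bullet> (x - y) \<le> norm (gf x - gf y) * norm (x - y)" by (rule norm_cauchy_schwarz)
    also have "\<dots> \<le> (1 / \<epsilon>) * norm (x - y) * norm (x - y)"
      using f_lip[OF inX(1) inX(2)] by (intro mult_right_mono) auto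
    finally have "(gf x - gf y) \<bullet> (x - y) \<le> (1 / \<epsilon>) * N" unfolding N_def by (simp add: power2_eq_square)
    moreover have "(gf x - gf y) \<bullet> (x - y) = - (g \<bullet> (y - x)) - gf y \<bullet> (x - y)"
      unfolding g_def by (simp add: algebra_simps inner_diff_left inner_diff_right)
    ultimately show ?thesis using b s1 by (simp add: algebra_simps)
  qed
  have coupg: "\<tau> * (g \<bullet> (x - z)) = g \<bullet> (y - x)" using yx by simp
  have key: "A1 * (\<mu> * D xs z' + f y' - f xs) - A0 * (\<mu> * D xs z + f y - f xs)
     = A1 * (\<mu> * (w \<bullet> (z' - z) - D z' z)) - \<alpha> * \<mu> * D z x + \<alpha> * (\<mu> * D xs x - g \<bullet> (z - xs))
       + A1 * (f y' - f xs) - A0 * (f y - f xs)"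
  proof -
    have "D xs z' = D xs z - D z' z + w \<bullet> (z' - z) + \<tau> * (- D z x - D xs z + D xs x) - \<tau> / \<mu> * (g \<bullet> (z - xs))"
      using I1 I3[unfolded I2] by linarith
    then have "A1 * (A1 * (\<mu> * D xs z' + f y' - f xs) - A0 * (\<mu> * D xs z + f y - f xs))
     = A1 * (A1 * (\<mu> * (w \<bullet> (z' - z) - D z' z)) - \<alpha> * \<mu> * D z x + \<alpha> * (\<mu> * D xs x - g \<bullet> (z - xs))
       + A1 * (f y' - f xs) - A0 * (f y - f xs))"
      using A1p pos(1) unfolding \<tau>_def \<alpha>_def by (simp add: field_simps)
    then show ?thesis using A1p by simp
  qed
  have c': "A1 * (\<mu> * (w \<bullet> (z' - z) - D z' z)) \<le> A1 * (\<mu> * (norm w)\<^sup>2 / (2 * \<sigma>))"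
    using c A1p by (intro mult_left_mono) auto
  have d': "\<alpha> * \<mu> * D z x \<ge> \<alpha> * \<mu> * (\<sigma> / 2 * (norm (x - z))\<^sup>2)"
    using d al0 pos by (intro mult_left_mono) auto
  have d'': "A1 * (\<sigma> * \<mu> / (2 * \<tau>)) * N = \<alpha> * \<mu> * (\<sigma> / 2 * (norm (x - z))\<^sup>2)"
  proof (cases "\<tau> = 0")
    case True then show ?thesis using A1tau by simp
  next
    case False then show ?thesis unfolding Nz A1tau[symmetric] by (simp add: field_simps power2_eq_square)
  qed
  have a': "\<alpha> * (\<mu> * D xs x - g \<bullet> (z - xs)) \<le> \<alpha> * (f xs - f x + g \<bullet> (x - z))"
  proof -
    have "\<mu> * D xs x - g \<bullet> (z - xs) \<le> f xs - f x + g \<bullet> (x - z)"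
      using a by (simp add: algebra_simps inner_diff_right)
    then show ?thesis using al0 by (intro mult_left_mono) auto
  qed
  have a'': "\<alpha> * (g \<bullet> (x - z)) = A1 * (g \<bullet> (y - x))"
    using coupg A1tau by (metis mult.assoc)
  have b': "A0 * (\<mu> * (\<sigma> / 2 * N)) \<le> A0 * (f y - f x - g \<bullet> (y - x))"
    using b A by (intro mult_left_mono) auto
  have e': "\<alpha> * (\<mu> * \<sigma> * N) \<le> \<alpha> * ((1 / \<epsilon>) * N)"
    using e al0 by (intro mult_left_mono) auto
  have t: "A1 * (\<tau> / (2 * \<epsilon>)) * N = \<alpha> * ((1 / \<epsilon>) * N) / 2"
    using A1tau by (simp add: field_simps)
  have goal: "A1 * (\<mu> * D xs z' + f y' - f xs) - A0 * (\<mu> * D xs z + f y - f xs) \<le>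
      A1 * (f y' - f x) + A1 * (\<tau> / (2 * \<epsilon>) - \<sigma> * \<mu> / (2 * \<tau>)) * N
    - A1 * \<mu> * \<sigma> / 2 * N + \<alpha> * (g \<bullet> (y - x)) + A1 * \<mu> / (2 * \<sigma>) * (norm w)\<^sup>2"
  proof -
    have r: "A1 * (\<tau> / (2 * \<epsilon>) - \<sigma> * \<mu> / (2 * \<tau>)) * N = A1 * (\<tau> / (2 * \<epsilon>)) * N - A1 * (\<sigma> * \<mu> / (2 * \<tau>)) * N"
      by (simp add: algebra_simps)
    have r2: "A1 * \<mu> * \<sigma> / 2 * N = A0 * (\<mu> * (\<sigma> / 2 * N)) + \<alpha> * (\<mu> * \<sigma> * N) / 2"
      unfolding \<alpha>_def by (simp add: field_simps)
    have r3: "A1 * \<mu> / (2 * \<sigma>) * (norm w)\<^sup>2 = A1 * (\<mu> * (norm w)\<^sup>2 / (2 * \<sigma>))" by simp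
    have r4: "\<alpha> * (f xs - f x + g \<bullet> (x - z)) = \<alpha> * (f xs - f x) + \<alpha> * (g \<bullet> (x - z))"
      by (simp add: algebra_simps)
    have r5: "A0 * (f y - f x - g \<bullet> (y - x)) = A0 * (f y - f x) - A0 * (g \<bullet> (y - x))" by (simp add: algebra_simps)
    have r6: "A1 * (f y' - f xs) - A0 * (f y - f xs) + \<alpha> * (f xs - f x) = A1 * (f y' - f x) - A0 * (f y - f x)"
      unfolding \<alpha>_def by (simp add: algebra_simps)
    have r7: "\<alpha> * (g \<bullet> (y - x)) = A1 * (g \<bullet> (y - x)) - A0 * (g \<bullet> (y - x))"
      unfolding \<alpha>_def by (simp add: algebra_simps)
    show ?thesis unfolding key r r2 r3 r7 t d''
      using c' d' a' a'' b' e' r4 r5 r6 by argo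
  qed
  show ?thesis using goal unfolding D_def N_def w_def g_def \<tau>_def \<alpha>_def .
qed

theorem proposition7:
  fixes X :: "'a::euclidean_space set"
    and h f :: "'a \<Rightarrow> real"
    and gh gf :: "'a \<Rightarrow> 'a"
    and \<mu> \<sigma> \<epsilon> \<delta> :: real
    and xs :: 'a
    and A :: "nat \<Rightarrow> real"
    and x y z :: "nat \<Rightarrow> 'a"
  assumes X_closed: "closed X" and X_convex: "convex X"
    and pos: "\<mu> > 0" "\<sigma> > 0" "\<epsilon> > 0" "\<delta> > 0"
    and h_grad: "\<And>u. u \<in> X \<Longrightarrow> (h has_derivative (\<lambda>v. gh u \<bullet> v)) (at u within X)"
    and gh_cont: "continuous_on X gh"
    and h_strong: "\<And>u v. u \<in> X \<Longrightarrow> v \<in> X \<Longrightarrow> bregman h gh u v \<ge> \<sigma> / 2 * (norm (u - v))\<^sup>2"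
    and f_grad: "\<And>u. u \<in> X \<Longrightarrow> (f has_derivative (\<lambda>v. gf u \<bullet> v)) (at u within X)"
    and f_lip: "\<And>u v. u \<in> X \<Longrightarrow> v \<in> X \<Longrightarrow> norm (gf u - gf v) \<le> (1 / \<epsilon>) * norm (u - v)"
    and f_unif: "\<And>u v. u \<in> X \<Longrightarrow> v \<in> X \<Longrightarrow> bregman f gf u v \<ge> \<mu> * bregman h gh u v"
    and xs_in: "xs \<in> X" and xs_min: "\<And>u. u \<in> X \<Longrightarrow> f xs \<le> f u"
    and A_pos: "\<And>k. A k > 0" and A_mono: "mono A"
    and seq_in: "\<And>k. x k \<in> X" "\<And>k. y k \<in> X" "\<And>k. z k \<in> X"
    and coupling: "\<And>k. x k = (((A (Suc k) - A k) / A (Suc k)) / (1 + (A (Suc k) - A k) / A (Suc k))) *\<^sub>R z k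
                              + (1 / (1 + (A (Suc k) - A k) / A (Suc k))) *\<^sub>R y k"
    and mirror: "\<And>k. gh (z (Suc k)) - gh (z k)
                   = ((A (Suc k) - A k) / A (Suc k)) *\<^sub>R (gh (x k) - gh (z k) - (1 / \<mu>) *\<^sub>R gf (x k))"
  shows "\<forall>k. let \<alpha> = A (Suc k) - A k; \<tau> = \<alpha> / A (Suc k);
               E = (\<lambda>j. A j * (\<mu> * bregman h gh xs (z j) + f (y j) - f xs)) in
           (E (Suc k) - E k) / \<delta> \<le>
              A (Suc k) / \<delta> * (f (y (Suc k)) - f (x k))
            + A (Suc k) / \<delta> * (\<tau> / (2 * \<epsilon>) - \<sigma> * \<mu> / (2 * \<tau>)) * (norm (x k - y k))\<^sup>2
            - A (Suc k) * \<mu> * \<sigma> / (2 * \<delta>) * (norm (x k - y k))\<^sup>2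
            + \<alpha> / \<delta> * (gf (x k) \<bullet> (y k - x k))
            + A (Suc k) * \<mu> / (2 * \<sigma> * \<delta>)
                * (norm (\<tau> *\<^sub>R (gh (x k) - gh (z k) - (1 / \<mu>) *\<^sub>R gf (x k))))\<^sup>2
           \<and> ((X = UNIV \<and> (\<forall>u. h u = (norm u)\<^sup>2 / 2)) \<longrightarrow>
              (E (Suc k) - E k) / \<delta> \<le>
                A (Suc k) / \<delta> * (f (y (Suc k)) - f (x k)
                  + \<tau>\<^sup>2 / (2 * \<mu>) * (norm (gf (x k)))\<^sup>2
                  + (\<tau> / (2 * \<epsilon>) - \<mu> / (2 * \<tau>)) * (norm (x k - y k))\<^sup>2))"
  proof
  fix k
  define A0 where "A0 = A k"
  define A1 where "A1 = A (Suc k)"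
  define \<alpha> where "\<alpha> = A1 - A0"
  define \<tau> where "\<tau> = \<alpha> / A1"
  have A0p: "0 < A0" using A_pos A0_def by simp
  have A01: "A0 \<le> A1" using A_mono unfolding A0_def A1_def mono_def by simp
  have A1p: "0 < A1" using A0p A01 by linarith
  have A1tau: "A1 * \<tau> = \<alpha>" using A1p \<tau>_def by simp
  have tau0: "\<tau> \<ge> 0" using A01 A1p unfolding \<tau>_def \<alpha>_def by simp
  have co: "x k = ((\<alpha> / A1) / (1 + \<alpha> / A1)) *\<^sub>R z k + (1 / (1 + \<alpha> / A1)) *\<^sub>R y k"
    using coupling[of k] unfolding \<alpha>_def A0_def A1_def .
  have "(1 + \<tau>) *\<^sub>R x k = \<tau> *\<^sub>R z k + y k"
  proof -
    have "1 + \<tau> \<noteq> 0" using tau0 by simp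
    then show ?thesis using co unfolding \<tau>_def by (simp add: scaleR_add_right)
  qed
  then have yx: "y k - x k = \<tau> *\<^sub>R (x k - z k)" by (simp add: algebra_simps)
  have P1: "A1 * (\<mu> * bregman h gh xs (z (Suc k)) + f (y (Suc k)) - f xs) - A0 * (\<mu> * bregman h gh xs (z k) + f (y k) - f xs) \<le>
      A1 * (f (y (Suc k)) - f (x k))
    + A1 * (\<tau> / (2 * \<epsilon>) - \<sigma> * \<mu> / (2 * \<tau>)) * (norm (x k - y k))\<^sup>2
    - A1 * \<mu> * \<sigma> / 2 * (norm (x k - y k))\<^sup>2
    + \<alpha> * (gf (x k) \<bullet> (y k - x k))
    + A1 * \<mu> / (2 * \<sigma>) * (norm (\<tau> *\<^sub>R (gh (x k) - gh (z k) - (1 / \<mu>) *\<^sub>R gf (x k))))\<^sup>2"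
    unfolding \<tau>_def \<alpha>_def
    by (rule core[OF pos(1,2,3) h_strong f_lip f_unif xs_in xs_min A0p A01 seq_in(1,2,3) seq_in(3) seq_in(2)])
       (auto simp: coupling[of k, folded A0_def A1_def] mirror[of k, folded A0_def A1_def])
  have part1: "(A1 * (\<mu> * bregman h gh xs (z (Suc k)) + f (y (Suc k)) - f xs) - A0 * (\<mu> * bregman h gh xs (z k) + f (y k) - f xs)) / \<delta> \<le>
      A1 / \<delta> * (f (y (Suc k)) - f (x k))
    + A1 / \<delta> * (\<tau> / (2 * \<epsilon>) - \<sigma> * \<mu> / (2 * \<tau>)) * (norm (x k - y k))\<^sup>2
    - A1 * \<mu> * \<sigma> / (2 * \<delta>) * (norm (x k - y k))\<^sup>2
    + \<alpha> / \<delta> * (gf (x k) \<bullet> (y k - x k))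
    + A1 * \<mu> / (2 * \<sigma> * \<delta>) * (norm (\<tau> *\<^sub>R (gh (x k) - gh (z k) - (1 / \<mu>) *\<^sub>R gf (x k))))\<^sup>2"
  proof -
    have "(A1 * (\<mu> * bregman h gh xs (z (Suc k)) + f (y (Suc k)) - f xs) - A0 * (\<mu> * bregman h gh xs (z k) + f (y k) - f xs)) / \<delta> \<le>
      (A1 * (f (y (Suc k)) - f (x k))
    + A1 * (\<tau> / (2 * \<epsilon>) - \<sigma> * \<mu> / (2 * \<tau>)) * (norm (x k - y k))\<^sup>2
    - A1 * \<mu> * \<sigma> / 2 * (norm (x k - y k))\<^sup>2
    + \<alpha> * (gf (x k) \<bullet> (y k - x k))
    + A1 * \<mu> / (2 * \<sigma>) * (norm (\<tau> *\<^sub>R (gh (x k) - gh (z k) - (1 / \<mu>) *\<^sub>R gf (x k))))\<^sup>2) / \<delta>"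
      by (rule divide_right_mono[OF P1]) (use pos(4) in simp)
    also have "\<dots> = A1 / \<delta> * (f (y (Suc k)) - f (x k))
    + A1 / \<delta> * (\<tau> / (2 * \<epsilon>) - \<sigma> * \<mu> / (2 * \<tau>)) * (norm (x k - y k))\<^sup>2
    - A1 * \<mu> * \<sigma> / (2 * \<delta>) * (norm (x k - y k))\<^sup>2
    + \<alpha> / \<delta> * (gf (x k) \<bullet> (y k - x k))
    + A1 * \<mu> / (2 * \<sigma> * \<delta>) * (norm (\<tau> *\<^sub>R (gh (x k) - gh (z k) - (1 / \<mu>) *\<^sub>R gf (x k))))\<^sup>2"
      by (simp add: add_divide_distrib diff_divide_distrib)
    finally show ?thesis .
  qed
  have part2: "(X = UNIV \<and> (\<forall>u. h u = (norm u)\<^sup>2 / 2)) \<longrightarrow>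
      (A1 * (\<mu> * bregman h gh xs (z (Suc k)) + f (y (Suc k)) - f xs) - A0 * (\<mu> * bregman h gh xs (z k) + f (y k) - f xs)) / \<delta> \<le>
                A1 / \<delta> * (f (y (Suc k)) - f (x k)
                  + \<tau>\<^sup>2 / (2 * \<mu>) * (norm (gf (x k)))\<^sup>2
                  + (\<tau> / (2 * \<epsilon>) - \<mu> / (2 * \<tau>)) * (norm (x k - y k))\<^sup>2)"
  proof
    assume H: "X = UNIV \<and> (\<forall>u. h u = (norm u)\<^sup>2 / 2)"
    have hh: "h = (\<lambda>u. (norm u)\<^sup>2 / 2)" using H by auto
    have ghid: "gh u = u" for u
    proof -
      have d1: "(h has_derivative (\<lambda>v. gh u \<bullet> v)) (at u)" using h_grad[of u] H by simp
      have "((\<lambda>u. u \<bullet> u) has_derivative (\<lambda>v. u \<bullet> v + v \<bullet> u)) (at u)"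
        by (rule has_derivative_inner[OF has_derivative_ident has_derivative_ident])
      then have "((\<lambda>u. (1/2) * (u \<bullet> u)) has_derivative (\<lambda>v. (1/2) * (u \<bullet> v + v \<bullet> u))) (at u)"
        by (rule has_derivative_mult_right)
      moreover have "(\<lambda>u. (1/2) * (u \<bullet> u)) = h" unfolding hh by (simp add: power2_norm_eq_inner)
      moreover have "(\<lambda>v. (1/2) * (u \<bullet> v + v \<bullet> u)) = (\<lambda>v. u \<bullet> v)" by (simp add: inner_commute)
      ultimately have d2: "(h has_derivative (\<lambda>v. u \<bullet> v)) (at u)" by simp
      have "(\<lambda>v. gh u \<bullet> v) = (\<lambda>v. u \<bullet> v)" by (rule has_derivative_unique[OF d1 d2])
      then have "(gh u - u) \<bullet> (gh u - u) = 0" by (metis inner_diff_left right_minus_eq)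
      then show ?thesis by simp
    qed
    have bh: "bregman h gh u v = (norm (u - v))\<^sup>2 / 2" for u v
      unfolding bregman_def hh ghid power2_norm_eq_inner
      by (simp add: inner_diff_left inner_diff_right inner_commute field_simps)
    have hs1: "\<And>u v. u \<in> X \<Longrightarrow> v \<in> X \<Longrightarrow> bregman h gh u v \<ge> 1 / 2 * (norm (u - v))\<^sup>2"
      by (simp add: bh)
    have P1': "A1 * (\<mu> * bregman h gh xs (z (Suc k)) + f (y (Suc k)) - f xs) - A0 * (\<mu> * bregman h gh xs (z k) + f (y k) - f xs) \<le>
      A1 * (f (y (Suc k)) - f (x k))
    + A1 * (\<tau> / (2 * \<epsilon>) - 1 * \<mu> / (2 * \<tau>)) * (norm (x k - y k))\<^sup>2
    - A1 * \<mu> * 1 / 2 * (norm (x k - y k))\<^sup>2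
    + \<alpha> * (gf (x k) \<bullet> (y k - x k))
    + A1 * \<mu> / (2 * 1) * (norm (\<tau> *\<^sub>R (gh (x k) - gh (z k) - (1 / \<mu>) *\<^sub>R gf (x k))))\<^sup>2"
      unfolding \<tau>_def \<alpha>_def
      by (rule core[OF pos(1) zero_less_one pos(3) hs1 f_lip f_unif xs_in xs_min A0p A01 seq_in(1,2,3) seq_in(3) seq_in(2)])
         (auto simp: coupling[of k, folded A0_def A1_def] mirror[of k, folded A0_def A1_def] bh pos)
    have nrm: "(norm (\<tau> *\<^sub>R (gh (x k) - gh (z k) - (1 / \<mu>) *\<^sub>R gf (x k))))\<^sup>2
       = (norm (x k - y k))\<^sup>2 - 2 * \<tau> / \<mu> * (gf (x k) \<bullet> (y k - x k)) + \<tau>\<^sup>2 / \<mu>\<^sup>2 * (norm (gf (x k)))\<^sup>2"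
    proof -
      have e: "\<tau> *\<^sub>R (gh (x k) - gh (z k) - (1 / \<mu>) *\<^sub>R gf (x k)) = (y k - x k) - (\<tau> / \<mu>) *\<^sub>R gf (x k)"
        using yx by (simp add: ghid algebra_simps)
      show ?thesis unfolding e power2_norm_eq_inner
        by (simp add: inner_diff_left inner_diff_right inner_commute algebra_simps power2_eq_square)
    qed
    have "A1 * (\<mu> * bregman h gh xs (z (Suc k)) + f (y (Suc k)) - f xs) - A0 * (\<mu> * bregman h gh xs (z k) + f (y k) - f xs) \<le>
        A1 * (f (y (Suc k)) - f (x k)
                  + \<tau>\<^sup>2 / (2 * \<mu>) * (norm (gf (x k)))\<^sup>2
                  + (\<tau> / (2 * \<epsilon>) - \<mu> / (2 * \<tau>)) * (norm (x k - y k))\<^sup>2)"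
    proof -
      have "A1 * \<mu> / (2 * 1) * (norm (\<tau> *\<^sub>R (gh (x k) - gh (z k) - (1 / \<mu>) *\<^sub>R gf (x k))))\<^sup>2
        = A1 * \<mu> / 2 * (norm (x k - y k))\<^sup>2 - \<alpha> * (gf (x k) \<bullet> (y k - x k)) + A1 * (\<tau>\<^sup>2 / (2 * \<mu>) * (norm (gf (x k)))\<^sup>2)"
        unfolding nrm A1tau[symmetric] using pos(1) by (simp add: field_simps power2_eq_square)
      then show ?thesis using P1' by (simp add: algebra_simps)
    qed
    then show "(A1 * (\<mu> * bregman h gh xs (z (Suc k)) + f (y (Suc k)) - f xs) - A0 * (\<mu> * bregman h gh xs (z k) + f (y k) - f xs)) / \<delta> \<le>
                A1 / \<delta> * (f (y (Suc k)) - f (x k)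
                  + \<tau>\<^sup>2 / (2 * \<mu>) * (norm (gf (x k)))\<^sup>2
                  + (\<tau> / (2 * \<epsilon>) - \<mu> / (2 * \<tau>)) * (norm (x k - y k))\<^sup>2)"
      using pos(4) by (simp add: divide_right_mono)
  qed
  show "let \<alpha> = A (Suc k) - A k; \<tau> = \<alpha> / A (Suc k);
               E = (\<lambda>j. A j * (\<mu> * bregman h gh xs (z j) + f (y j) - f xs)) in
           (E (Suc k) - E k) / \<delta> \<le>
              A (Suc k) / \<delta> * (f (y (Suc k)) - f (x k))
            + A (Suc k) / \<delta> * (\<tau> / (2 * \<epsilon>) - \<sigma> * \<mu> / (2 * \<tau>)) * (norm (x k - y k))\<^sup>2
            - A (Suc k) * \<mu> * \<sigma> / (2 * \<delta>) * (norm (x k - y k))\<^sup>2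
            + \<alpha> / \<delta> * (gf (x k) \<bullet> (y k - x k))
            + A (Suc k) * \<mu> / (2 * \<sigma> * \<delta>)
                * (norm (\<tau> *\<^sub>R (gh (x k) - gh (z k) - (1 / \<mu>) *\<^sub>R gf (x k))))\<^sup>2
           \<and> ((X = UNIV \<and> (\<forall>u. h u = (norm u)\<^sup>2 / 2)) \<longrightarrow>
              (E (Suc k) - E k) / \<delta> \<le>
                A (Suc k) / \<delta> * (f (y (Suc k)) - f (x k)
                  + \<tau>\<^sup>2 / (2 * \<mu>) * (norm (gf (x k)))\<^sup>2
                  + (\<tau> / (2 * \<epsilon>) - \<mu> / (2 * \<tau>)) * (norm (x k - y k))\<^sup>2))"
    using part1 part2 unfolding Let_def \<tau>_def \<alpha>_def A0_def A1_def by simp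
qed

end
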